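(* Let $\mathcal{C}$ be a finite or countable alphabet with letter probabilities $(p_\alpha)_{\alpha\in\mathcal{C}}$, $0<p_\alpha<1$, $\sum_\alpha p_\alpha=1$, and let $\mathbb{P}$ be the product measure with these identically distributed marginals. There exists a sequence $A(k)$ with $\lim_{k\to\infty}A(k)=0$ such that $a_k\ge m_2^{k+1}/(1-m_2)-A(k)$ for all positive integers $k$. Furthermore: (a) if $m_2\le 1/2$, then $m_2^k>a_k$ for all $k\in\mathbb{N}$; (b) if $m_2>1/2$, then (1) $a_1<m_2$, and (2) there exists $k_0>0$ such that $a_k>m_2^k$ for all $k>k_0$.
   Context: $\mathbb{P}(x_1^n)=\prod_{i=1}^n p_{x_i}$; $x_a^b=(x_a,\dots,x_b)$. For $1\le j\le n-1$, $R_n(j)=\{x_1^n\in\mathcal{C}^n: x_1^j=x_{n-j+1}^n\}$; unions over empty index ranges are empty. $m_q=\sum_\alpha p_\alpha^q$, and $a_k=\sum_{i=k+1}^{\infty}\mathbb{P}\Big(R_{2i}(i)\setminus\bigcup_{j=k}^{i-1}R_{2i}(j)\Big)$. *)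

theory Defs
  imports "HOL-Analysis.Analysis"
begin

definition wprob :: "('a \<Rightarrow> real) \<Rightarrow> 'a list set \<Rightarrow> real" where
  "wprob p S = infsum (\<lambda>xs. prod_list (map p xs)) S"

definition Rset :: "nat \<Rightarrow> nat \<Rightarrow> 'a list set" where
  "Rset n j = {xs. length xs = n \<and> take j xs = drop (n - j) xs}"

definition moment :: "('a \<Rightarrow> real) \<Rightarrow> nat \<Rightarrow> real" where
  "moment p q = infsum (\<lambda>a. p a ^ q) UNIV"

definition a_seq :: "('a \<Rightarrow> real) \<Rightarrow> nat \<Rightarrow> real" where
  "a_seq p k = infsum (\<lambda>i. wprob p (Rset (2*i) i - (\<Union>j\<in>{k..<i}. Rset (2*i) j))) {k<..}"

end

theory Submission
  imports Defs
begin


definition PL :: "('a \<Rightarrow> real) \<Rightarrow> 'a list \<Rightarrow> real" where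
  "PL h w = prod_list (map h w)"

definition Ln :: "nat \<Rightarrow> 'a list set" where "Ln n = {xs. length xs = n}"

lemma has_sum_times_nonneg:
  fixes f :: "'a \<Rightarrow> real" and g :: "'b \<Rightarrow> real"
  assumes fa: "(f has_sum a) A" and gb: "(g has_sum b) B"
    and fn: "\<And>x. x\<in>A \<Longrightarrow> f x \<ge> 0" and gn: "\<And>y. y\<in>B \<Longrightarrow> g y \<ge> 0"
  shows "((\<lambda>(x,y). f x * g y) has_sum (a*b)) (A \<times> B)"
proof -
  have sm: "(\<lambda>(x,y). f x * g y) summable_on (A \<times> B)"
  proof (rule nonneg_bdd_above_summable_on)
    show "\<And>z. z \<in> A\<times>B \<Longrightarrow> 0 \<le> (\<lambda>(x,y). f x * g y) z" using fn gn by auto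
    show "bdd_above (sum (\<lambda>(x,y). f x * g y) ` {F. F \<subseteq> A\<times>B \<and> finite F})"
    proof (rule bdd_aboveI2)
      fix F assume F: "F \<in> {F. F \<subseteq> A\<times>B \<and> finite F}"
      have "sum (\<lambda>(x,y). f x * g y) F \<le> sum (\<lambda>(x,y). f x * g y) (fst`F \<times> snd`F)"
        apply (rule sum_mono2) using F fn gn by (force intro!: mult_nonneg_nonneg)+
      also have "\<dots> = sum f (fst`F) * sum g (snd`F)"
        by (simp add: sum_product sum.cartesian_product)
      also have "\<dots> \<le> a * b"
      proof (rule mult_mono)
        show "sum f (fst`F) \<le> a" using F fa fn by (intro finite_sum_le_has_sum) auto
        show "sum g (snd`F) \<le> b" using F gb gn by (intro finite_sum_le_has_sum) auto
        show "0 \<le> a" using fa fn has_sum_nonneg by blast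
        show "0 \<le> sum g (snd`F)" using F gn by (intro sum_nonneg) auto
      qed
      finally show "sum (\<lambda>(x,y). f x * g y) F \<le> a * b" .
    qed
  qed
  have "infsum (\<lambda>(x,y). f x * g y) (A \<times> B) = infsum (\<lambda>x. infsum (\<lambda>y. f x * g y) B) A"
    using infsum_Sigma_banach[of "\<lambda>(x,y). f x * g y" A "\<lambda>_. B"] sm by simp
  also have "\<dots> = infsum (\<lambda>x. f x * b) A"
    using gb by (simp add: infsum_cmult_right' infsumI)
  also have "\<dots> = a * b" using fa by (simp add: infsum_cmult_left' infsumI)
  finally show ?thesis using sm by (metis has_sum_infsum)
qed

lemma PL_nonneg: "(\<And>a. h a \<ge> 0) \<Longrightarrow> PL h w \<ge> 0"
  unfolding PL_def by (induction w) auto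

lemma PL_Cons[simp]: "PL h (a # w) = h a * PL h w" by (simp add: PL_def)
lemma PL_Nil[simp]: "PL h [] = 1" by (simp add: PL_def)
lemma PL_append[simp]: "PL h (u @ v) = PL h u * PL h v" by (simp add: PL_def)

lemma Ln_Suc: "Ln (Suc n) = (\<lambda>(a,v). a # v) ` (UNIV \<times> Ln n)"
  unfolding Ln_def by (auto simp: length_Suc_conv image_iff)

lemma PL_has_sum:
  assumes hn: "\<And>a. h a \<ge> 0" and hs: "(h has_sum s) UNIV"
  shows "(PL h has_sum s ^ n) (Ln n)"
proof (induction n)
  case 0
  have e: "Ln 0 = {[]}" by (auto simp: Ln_def)
  show ?case by (subst e) (rule has_sum_finiteI, auto)
next
  case (Suc n)
  have "((\<lambda>(a,v). h a * PL h v) has_sum (s * s^n)) (UNIV \<times> Ln n)"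
    by (rule has_sum_times_nonneg[OF hs Suc]) (auto intro: hn PL_nonneg)
  moreover have "inj_on (\<lambda>(a,v). a # v) (UNIV \<times> Ln n)" by (auto simp: inj_on_def)
  ultimately show ?case unfolding Ln_Suc
    by (subst has_sum_reindex) (auto simp: o_def case_prod_unfold)
qed

lemma Rset_sub: "Rset i j \<subseteq> Ln i" by (auto simp: Rset_def Ln_def)

lemma Rset_nth:
  assumes "xs \<in> Rset i j" "j < i" "t < i" "i - j \<le> t"
  shows "xs ! t = xs ! (t - (i-j))"
proof -
  have l: "length xs = i" and e: "take j xs = drop (i-j) xs" using assms(1) by (auto simp: Rset_def)
  have "xs ! t = drop (i-j) xs ! (t - (i-j))" using assms l by simp
  also have "\<dots> = take j xs ! (t - (i-j))" using e by simp
  also have "\<dots> = xs ! (t - (i-j))" using assms by simp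
  finally show ?thesis .
qed

lemma inj_take_Rset:
  assumes "j < i" shows "inj_on (take (i-j)) (Rset i j)"
proof
  fix x y assume x: "x \<in> Rset i j" and y: "y \<in> Rset i j" and tk: "take (i-j) x = take (i-j) y"
  have lx: "length x = i" and ly: "length y = i" using x y by (auto simp: Rset_def)
  have "\<forall>t. t < i \<longrightarrow> x ! t = y ! t"
  proof (intro allI)
    fix t show "t < i \<longrightarrow> x ! t = y ! t"
    proof (induction t rule: less_induct)
      case (less t)
      show ?case
      proof (cases "t < i - j")
        case True
        then have "take (i-j) x ! t = take (i-j) y ! t" using tk by simp
        then show ?thesis using True by simp
      next
        case False
        show ?thesis
        proof
          assume ti: "t < i"
          have "x ! t = x ! (t - (i-j))" using Rset_nth[OF x assms ti] False by simp
          also have "\<dots> = y ! (t - (i-j))" using less.IH[of "t - (i-j)"] False ti assms by auto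
          also have "\<dots> = y ! t" using Rset_nth[OF y assms ti] False by simp
          finally show "x ! t = y ! t" .
        qed
      qed
    qed
  qed
  then show "x = y" using lx ly by (intro nth_equalityI) auto
qed

lemma PL_le_pow: "(\<And>a. 0 \<le> h a) \<Longrightarrow> (\<And>a. h a \<le> M) \<Longrightarrow> PL h w \<le> M ^ length w"
proof (induction w)
  case Nil then show ?case by simp
next
  case (Cons a w)
  have "h a * PL h w \<le> M * M ^ length w"
    by (rule mult_mono) (use Cons PL_nonneg[of h w] in \<open>auto intro: order_trans\<close>)
  then show ?case by simp
qed

lemma PL_replicate: "PL h (replicate n x) = h x ^ n" by (induction n) auto

lemma PL_sq: "PL (\<lambda>a. h a ^ 2) w = (PL h w) ^ 2"
  by (induction w) (auto simp: power_mult_distrib)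

lemma geo_has_sum:
  fixes x :: real assumes "0 \<le> x" "x < 1"
  shows "((\<lambda>i. x ^ i) has_sum (x ^ Suc k / (1 - x))) {k<..}"
proof -
  have "((\<lambda>n. x ^ n) has_sum (x / (1 - x))) {1..}" using assms by (intro has_sum_geometric_from_1) auto
  then have h0: "((\<lambda>n. x ^ k * x ^ n) has_sum (x ^ k * (x / (1 - x)))) {1..}" by (rule has_sum_cmult_right)
  have e: "x ^ Suc k / (1 - x) = x ^ k * (x / (1 - x))" by simp
  have h: "((\<lambda>n. x ^ k * x ^ n) has_sum (x ^ Suc k / (1 - x))) {1..}" unfolding e by (rule h0)
  show ?thesis
    by (rule has_sum_reindex_bij_witness[where i="\<lambda>b. b + k" and j="\<lambda>a. a - k", THEN iffD2, OF _ _ _ _ _ _ h])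
       (auto simp flip: power_add)
qed

lemma sq_Rset: "Rset (2*i) i = (\<lambda>w. w@w) ` Ln i"
proof
  show "Rset (2*i) i \<subseteq> (\<lambda>w. w@w) ` Ln i"
  proof
    fix xs assume "xs \<in> Rset (2*i) i"
    then have l: "length xs = 2*i" and e: "take i xs = drop i xs" by (auto simp: Rset_def)
    have "xs = take i xs @ drop i xs" by simp
    then have "xs = take i xs @ take i xs" using e by simp
    then show "xs \<in> (\<lambda>w. w@w) ` Ln i" using l by (auto simp: Ln_def image_iff intro!: exI[of _ "take i xs"])
  qed
  show "(\<lambda>w. w@w) ` Ln i \<subseteq> Rset (2*i) i" by (auto simp: Ln_def Rset_def)
qed

lemma sq_Rset_j: "j < i \<Longrightarrow> length w = i \<Longrightarrow> (w@w \<in> Rset (2*i) j) = (w \<in> Rset i j)"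
  by (auto simp: Rset_def)

lemma sq_set: "Rset (2*i) i - (\<Union>j\<in>{k..<i}. Rset (2*i) j) = (\<lambda>w. w@w) ` (Ln i - (\<Union>j\<in>{k..<i}. Rset i j))"
proof (rule set_eqI)
  fix xs
  show "xs \<in> Rset (2*i) i - (\<Union>j\<in>{k..<i}. Rset (2*i) j) \<longleftrightarrow> xs \<in> (\<lambda>w. w@w) ` (Ln i - (\<Union>j\<in>{k..<i}. Rset i j))"
  proof
    assume a: "xs \<in> Rset (2*i) i - (\<Union>j\<in>{k..<i}. Rset (2*i) j)"
    then obtain w where w: "w \<in> Ln i" "xs = w@w" unfolding sq_Rset by auto
    have "w \<notin> Rset i j" if "j \<in> {k..<i}" for j
      using a that sq_Rset_j[of j i w] w by (auto simp: Ln_def)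
    then show "xs \<in> (\<lambda>w. w@w) ` (Ln i - (\<Union>j\<in>{k..<i}. Rset i j))" using w by blast
  next
    assume "xs \<in> (\<lambda>w. w@w) ` (Ln i - (\<Union>j\<in>{k..<i}. Rset i j))"
    then obtain w where w: "w \<in> Ln i" "xs = w@w" and nj: "\<And>j. j \<in> {k..<i} \<Longrightarrow> w \<notin> Rset i j" by blast
    have "xs \<notin> Rset (2*i) j" if "j \<in> {k..<i}" for j
      using nj[OF that] that sq_Rset_j[of j i w] w by (auto simp: Ln_def)
    moreover have "xs \<in> Rset (2*i) i" unfolding sq_Rset using w by blast
    ultimately show "xs \<in> Rset (2*i) i - (\<Union>j\<in>{k..<i}. Rset (2*i) j)" by blast
  qed
qed

lemma inj_sq: "inj (\<lambda>w. w@w)"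
proof (rule injI)
  fix x y :: "'a list" assume e: "x @ x = y @ y"
  then have "length (x@x) = length (y@y)" by simp
  then have "length x = length y" by simp
  then show "x = y" using e append_eq_append_conv by blast
qed

lemma wprob_sq: "wprob p ((\<lambda>w. w@w) ` S) = infsum (PL (\<lambda>a. p a ^ 2)) S"
proof -
  have "infsum (\<lambda>xs. prod_list (map p xs)) ((\<lambda>w. w@w) ` S) = infsum (\<lambda>w. PL p w * PL p w) S"
    by (subst infsum_reindex) (auto intro: inj_on_subset[OF inj_sq] simp: o_def PL_def)
  also have "\<dots> = infsum (PL (\<lambda>a. p a ^ 2)) S"
    by (rule infsum_cong) (subst PL_sq, simp add: power2_eq_square)
  finally show ?thesis unfolding wprob_def .
qed

lemma a_seq_eq: "a_seq p k = infsum (\<lambda>i. infsum (PL (\<lambda>a. p a ^ 2)) (Ln i - (\<Union>j\<in>{k..<i}. Rset i j))) {k<..}"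
  unfolding a_seq_def sq_set wprob_sq ..





context
  fixes p :: "'a \<Rightarrow> real"
  assumes pos: "\<And>a. 0 < p a" and lt1: "\<And>a. p a < 1" and tot: "(p has_sum 1) UNIV"
begin

lemma pow_summable: assumes "n \<ge> 1" shows "(\<lambda>a. p a ^ n) summable_on UNIV"
proof (rule summable_on_comparison_test[of p])
  show "p summable_on UNIV" using tot summable_on_def by blast
  fix a show "p a ^ n \<le> p a" using assms pos[of a] lt1[of a]
    by (metis less_imp_le power_decreasing power_one_right)
  show "0 \<le> p a ^ n" using pos[of a] by simp
qed

lemma pow_hs: "n \<ge> 1 \<Longrightarrow> ((\<lambda>a. p a ^ n) has_sum infsum (\<lambda>a. p a ^ n) UNIV) UNIV"
  using pow_summable by (simp)

lemma m_hs: "((\<lambda>a. p a ^ 2) has_sum moment p 2) UNIV"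
  unfolding moment_def using pow_hs[of 2] by simp

lemma m_ge: "p a ^ 2 \<le> moment p 2"
  using finite_sum_le_has_sum[OF m_hs, of "{a}"] pos by auto

lemma m_pos: "0 < moment p 2"
proof -
  have "0 < p undefined ^ 2" using pos[of undefined] by simp
  then show ?thesis using m_ge[of undefined] by (rule order_less_le_trans)
qed

lemma m_lt1: "moment p 2 < 1"
proof (rule has_sum_strict_mono[OF m_hs tot])
  fix a show "p a ^ 2 \<le> p a" using pos[of a] lt1[of a] by (simp add: power2_eq_square mult_le_cancel_right1 less_imp_le)
  show "undefined \<in> UNIV" by simp
  show "p undefined ^ 2 < p undefined" using pos[of undefined] lt1[of undefined]
    by (simp add: power2_eq_square)
qed

lemma exists_M: "\<exists>M. 0 \<le> M \<and> M < moment p 2 \<and> (\<forall>a. p a ^ 2 \<le> M)"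
proof -
  obtain a :: 'a where True by simp
  have "\<exists>b. b \<noteq> a"
  proof (rule ccontr)
    assume "\<not> (\<exists>b. b \<noteq> a)"
    then have "UNIV = {a}" by auto
    have "(p has_sum sum p {a}) {a}" by (rule has_sum_finite) simp
    then have "(p has_sum p a) {a}" by simp
    then have "(p has_sum p a) UNIV" using \<open>UNIV = {a}\<close> by metis
    then have "p a = 1" using tot has_sum_unique by blast
    then show False using lt1[of a] by simp
  qed
  then obtain b where ba: "b \<noteq> a" by blast
  define d where "d = min (p a ^ 2) (p b ^ 2)"
  have dpos: "d > 0" using pos[of a] pos[of b] by (simp add: d_def)
  have two: "p x ^ 2 + p y ^ 2 \<le> moment p 2" if "x \<noteq> y" for x y
    using finite_sum_le_has_sum[OF m_hs, of "{x,y}"] that pos by auto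
  have "p x ^ 2 \<le> moment p 2 - d" for x
  proof (cases "x = a")
    case True
    then show ?thesis using two[of x b] ba by (simp add: d_def)
  next
    case False
    then show ?thesis using two[of x a] by (simp add: d_def)
  qed
  moreover have "0 \<le> moment p 2 - d" by (rule order_trans[OF zero_le_power2 calculation])
  ultimately show ?thesis using dpos by (intro exI[of _ "moment p 2 - d"]) auto
qed

abbreviation G where "G \<equiv> PL (\<lambda>a. p a ^ 2)"

lemma G_nonneg: "G w \<ge> 0" by (rule PL_nonneg) simp

lemma G_hs: "(G has_sum moment p 2 ^ n) (Ln n)"
  by (rule PL_has_sum[OF _ m_hs]) simp

lemma G_summable: "S \<subseteq> Ln n \<Longrightarrow> G summable_on S"
  using G_hs summable_on_def summable_on_subset_banach by blast

lemma mu_diff: "S \<subseteq> Ln n \<Longrightarrow> infsum G (Ln n - S) = moment p 2 ^ n - infsum G S"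
  using infsum_Diff[OF G_summable[of "Ln n" n] G_summable] infsumI[OF G_hs] by auto

lemma mu_mono: "S \<subseteq> T \<Longrightarrow> T \<subseteq> Ln n \<Longrightarrow> infsum G S \<le> infsum G T"
  by (rule infsum_mono2[OF G_summable G_summable]) (auto simp: G_nonneg)

lemma mu_single: "x \<in> S \<Longrightarrow> S \<subseteq> Ln n \<Longrightarrow> G x \<le> infsum G S"
  using finite_sum_le_infsum[OF G_summable, of S n "{x}"] G_nonneg by auto

lemma mu_nonneg: "infsum G S \<ge> 0"
  by (rule infsum_nonneg) (simp add: G_nonneg)

lemma mu_Un_le: "A \<subseteq> Ln n \<Longrightarrow> B \<subseteq> Ln n \<Longrightarrow> infsum G (A \<union> B) \<le> infsum G A + infsum G B"
proof -
  assume A: "A \<subseteq> Ln n" and B: "B \<subseteq> Ln n"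
  have "A \<union> B = A \<union> (B - A)" by auto
  then have "infsum G (A \<union> B) = infsum G A + infsum G (B - A)"
    using infsum_Un_disjoint[OF G_summable[OF A] G_summable[of "B - A" n]] B by auto
  moreover have "infsum G (B - A) \<le> infsum G B" using mu_mono[of "B - A" B n] B by auto
  ultimately show ?thesis by simp
qed

lemma mu_UN_le:
  assumes "finite J" "\<And>j. j \<in> J \<Longrightarrow> S j \<subseteq> Ln n"
  shows "infsum G (\<Union>j\<in>J. S j) \<le> (\<Sum>j\<in>J. infsum G (S j))"
  using assms
proof (induction J rule: finite_induct)
  case empty then show ?case by simp
next
  case (insert x F)
  have "infsum G (\<Union>j\<in>insert x F. S j) = infsum G (S x \<union> (\<Union>j\<in>F. S j))" by simp
  also have "\<dots> \<le> infsum G (S x) + infsum G (\<Union>j\<in>F. S j)"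
    by (rule mu_Un_le) (use insert in auto)
  also have "\<dots> \<le> infsum G (S x) + (\<Sum>j\<in>F. infsum G (S j))" using insert by auto
  finally show ?case using insert by simp
qed

lemma mu_Rset_le:
  assumes ji: "j < i" and M0: "0 \<le> M" and Mb: "\<And>a. p a ^ 2 \<le> M"
  shows "infsum G (Rset i j) \<le> M ^ j * moment p 2 ^ (i - j)"
proof -
  define d where "d = i - j"
  define R where "R = (Rset i j :: 'a list set)"
  have inj: "inj_on (take d) R" unfolding d_def R_def by (rule inj_take_Rset[OF ji])
  have img: "take d ` R \<subseteq> Ln d" by (auto simp: R_def Rset_def Ln_def d_def)
  have s1: "G summable_on (take d ` R)" by (rule G_summable[OF img])
  have s2: "(G \<circ> take d) summable_on R" using summable_on_reindex[OF inj] s1 by blast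
  have s3: "(\<lambda>w. G (take d w) * M ^ j) summable_on R"
    using summable_on_cmult_left[OF s2, of "M^j"] by (simp add: o_def)
  have sR: "G summable_on R" unfolding R_def by (rule G_summable[OF Rset_sub])
  have le: "G w \<le> G (take d w) * M ^ j" if "w \<in> R" for w
  proof -
    have lw: "length w = i" using that by (auto simp: R_def Rset_def)
    have "G w = G (take d w @ drop d w)" by simp
    also have "\<dots> = G (take d w) * G (drop d w)" by (rule PL_append)
    also have "\<dots> \<le> G (take d w) * M ^ j"
    proof (rule mult_left_mono)
      have "G (drop d w) \<le> M ^ length (drop d w)" by (rule PL_le_pow) (use Mb in auto)
      then show "G (drop d w) \<le> M ^ j" using lw ji by (simp add: d_def)
      show "0 \<le> G (take d w)" by (rule PL_nonneg) simp
    qed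
    finally show ?thesis .
  qed
  have "infsum G R \<le> infsum (\<lambda>w. G (take d w) * M ^ j) R"
    by (rule infsum_mono[OF sR s3 le])
  also have "\<dots> = infsum (G \<circ> take d) R * M ^ j" by (simp add: infsum_cmult_left' o_def)
  also have "\<dots> = infsum G (take d ` R) * M ^ j" by (simp add: infsum_reindex[OF inj])
  also have "\<dots> \<le> moment p 2 ^ d * M ^ j"
  proof (rule mult_right_mono)
    have "infsum G (take d ` R) \<le> infsum G (Ln d)" by (rule mu_mono[OF img subset_refl])
    then show "infsum G (take d ` R) \<le> moment p 2 ^ d" using infsumI[OF G_hs] by simp
  qed (use M0 in simp)
  finally show ?thesis by (simp add: R_def d_def mult.commute)
qed

lemma mu_Rset1_ge:
  assumes "2 \<le> i"
  shows "infsum (\<lambda>a. p a ^ 4) UNIV * moment p 2 ^ (i - 2) \<le> infsum G (Rset i 1)"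
proof -
  define f where "f = (\<lambda>(a, v). a # v @ [a] :: 'a list)"
  have inj: "inj_on f (UNIV \<times> Ln (i-2))" by (auto simp: inj_on_def f_def)
  have hs: "((\<lambda>(a,v). p a ^ 4 * G v) has_sum (infsum (\<lambda>a. p a ^ 4) UNIV * moment p 2 ^ (i-2))) (UNIV \<times> Ln (i-2))"
    by (rule has_sum_times_nonneg[OF pow_hs[of 4, simplified] G_hs]) (auto intro: PL_nonneg)
  have "G \<circ> f = (\<lambda>(a,v). p a ^ 4 * G v)"
    by (auto simp: f_def fun_eq_iff)
  then have "((G \<circ> f) has_sum (infsum (\<lambda>a. p a ^ 4) UNIV * moment p 2 ^ (i-2))) (UNIV \<times> Ln (i-2))"
    using hs by simp
  then have "(G has_sum (infsum (\<lambda>a. p a ^ 4) UNIV * moment p 2 ^ (i-2))) (f ` (UNIV \<times> Ln (i-2)))"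
    using has_sum_reindex[OF inj] by blast
  then have e: "infsum G (f ` (UNIV \<times> Ln (i-2))) = infsum (\<lambda>a. p a ^ 4) UNIV * moment p 2 ^ (i-2)"
    by (rule infsumI)
  have sub: "f ` (UNIV \<times> Ln (i-2)) \<subseteq> Rset i 1"
  proof
    fix xs assume "xs \<in> f ` (UNIV \<times> Ln (i-2))"
    then obtain a v where xs: "xs = a # v @ [a]" and len: "length v = i - 2" by (auto simp: f_def Ln_def)
    have e: "i - 1 = Suc (length v)" "i - Suc 0 = Suc (length v)" using len assms by simp_all
    show "xs \<in> Rset i 1" using len assms unfolding xs Rset_def by (simp add: e)
  qed
  show ?thesis using mu_mono[OF sub Rset_sub] e by simp
qed

definition Tset :: "nat \<Rightarrow> nat \<Rightarrow> 'b list set" where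
  "Tset k i = Ln i - (\<Union>j\<in>{k..<i}. Rset i j)"

lemma U_sub: "(\<Union>j\<in>{k..<i}. Rset i j) \<subseteq> Ln i" using Rset_sub by blast

lemma muT_eq: "infsum G (Tset k i) = moment p 2 ^ i - infsum G (\<Union>j\<in>{k..<i}. Rset i j)"
  unfolding Tset_def by (rule mu_diff[OF U_sub])

lemma muT_le: "infsum G (Tset k i) \<le> moment p 2 ^ i"
  using muT_eq mu_nonneg by simp

lemma muT_rep: assumes "k < i" shows "infsum G (Tset k i) \<le> moment p 2 ^ i - (p a ^ 2) ^ i"
proof -
  have "replicate i a \<in> Rset i k" using assms by (simp add: Rset_def)
  then have "replicate i a \<in> (\<Union>j\<in>{k..<i}. Rset i j)" using assms by auto
  from mu_single[OF this U_sub] show ?thesis using muT_eq by (simp add: PL_replicate)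
qed

lemma muT_1: assumes "2 \<le> i"
  shows "infsum G (Tset 1 i) \<le> moment p 2 ^ i - infsum (\<lambda>a. p a ^ 4) UNIV * moment p 2 ^ (i - 2)"
proof -
  have "1 \<in> {1..<i}" using assms by simp
  then have "Rset i 1 \<subseteq> (\<Union>j\<in>{1..<i}. Rset i j)" by blast
  from mu_mono[OF this U_sub] mu_Rset1_ge[OF assms] show ?thesis using muT_eq by simp
qed

lemma muT_lower:
  assumes M0: "0 \<le> M" and M1: "M \<le> 1" and Mb: "\<And>a. p a ^ 2 \<le> M" and ki: "k < i" and iL: "i \<le> k + L"
  shows "moment p 2 ^ i - real L * M ^ k \<le> infsum G (Tset k i)"
proof -
  have m0: "0 \<le> moment p 2" and m1: "moment p 2 \<le> 1" using m_pos m_lt1 by auto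
  have "infsum G (\<Union>j\<in>{k..<i}. Rset i j) \<le> (\<Sum>j\<in>{k..<i}. infsum G (Rset i j))"
    by (rule mu_UN_le[where n=i]) (use Rset_sub in auto)
  also have "\<dots> \<le> (\<Sum>j\<in>{k..<i}. M ^ k)"
  proof (rule sum_mono)
    fix j assume j: "j \<in> {k..<i}"
    have "infsum G (Rset i j) \<le> M ^ j * moment p 2 ^ (i - j)"
      by (rule mu_Rset_le) (use j M0 Mb in auto)
    also have "\<dots> \<le> M ^ k * 1"
    proof (rule mult_mono)
      show "M ^ j \<le> M ^ k" using j M0 M1 by (intro power_decreasing) auto
      show "moment p 2 ^ (i - j) \<le> 1" using m0 m1 by (rule power_le_one)
    qed (use M0 m0 in auto)
    finally show "infsum G (Rset i j) \<le> M ^ k" by simp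
  qed
  also have "\<dots> = real (i - k) * M ^ k" by simp
  also have "\<dots> \<le> real L * M ^ k" using ki iL M0 by (intro mult_right_mono) auto
  finally show ?thesis using muT_eq by simp
qed

lemma muT_summable: "(\<lambda>i. infsum G (Tset k i)) summable_on {k<..}"
proof (rule summable_on_comparison_test)
  show "(\<lambda>i. moment p 2 ^ i) summable_on {k<..}"
    using geo_has_sum[of "moment p 2" k] m_pos m_lt1 summable_on_def by fastforce
qed (auto intro: muT_le mu_nonneg)

lemma a_seq_T: "a_seq p k = infsum (\<lambda>i. infsum G (Tset k i)) {k<..}"
  unfolding a_seq_eq Tset_def ..

lemma key_ineq: "2 * moment p 2 ^ 2 < moment p 2 + infsum (\<lambda>a. p a ^ 4) UNIV"
proof -
  define m where "m = moment p 2"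
  define m4 where "m4 = infsum (\<lambda>a. p a ^ 4) UNIV"
  have h4: "((\<lambda>a. p a ^ 4) has_sum m4) UNIV" unfolding m4_def using pow_hs[of 4] by simp
  have h2: "((\<lambda>a. p a ^ 2) has_sum m) UNIV" unfolding m_def by (rule m_hs)
  define f where "f a = p a ^ 2 + p a ^ 4 + (-4*m) * p a ^ 2 + (2*m^2) * p a" for a
  have hs: "(f has_sum
      (m + m4 + (-4*m) * m + (2*m^2) * 1)) UNIV" unfolding f_def
    by (intro has_sum_add h2 h4 has_sum_cmult_right tot)
  have fe: "p a ^ 2 + p a ^ 4 + (-4*m) * p a ^ 2 + (2*m^2) * p a
      = (p a)^2 * (1 - p a)^2 + 2 * p a * (p a - m)^2" for a
    by (simp add: eval_nat_numeral algebra_simps)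
  have fpos: "0 < f a" for a
  proof -
    have "0 < (p a)^2 * (1 - p a)^2" using pos[of a] lt1[of a] by simp
    moreover have "0 \<le> 2 * p a * (p a - m)^2" using pos[of a] by simp
    ultimately show ?thesis unfolding f_def fe by linarith
  qed
  have "0 < m + m4 + (-4*m) * m + (2*m^2) * 1"
    by (rule has_sum_strict_mono[OF has_sum_0_simp hs, of undefined]) (auto intro: less_imp_le fpos)
  then show ?thesis unfolding m_def[symmetric] m4_def[symmetric] by (simp add: power2_eq_square)
qed

end

theorem proposition2:
  fixes p :: "'a::countable \<Rightarrow> real"
  assumes pos: "\<And>a. 0 < p a" and lt1: "\<And>a. p a < 1"
    and tot: "(p has_sum 1) UNIV"
  shows "(\<exists>A :: nat \<Rightarrow> real. A \<longlonglongrightarrow> 0 \<and>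
            (\<forall>k\<ge>1. a_seq p k \<ge> moment p 2 ^ (k+1) / (1 - moment p 2) - A k))
       \<and> (moment p 2 \<le> 1/2 \<longrightarrow> (\<forall>k\<ge>1. moment p 2 ^ k > a_seq p k))
       \<and> (moment p 2 > 1/2 \<longrightarrow>
            a_seq p 1 < moment p 2 \<and> (\<exists>k0>0. \<forall>k>k0. a_seq p k > moment p 2 ^ k))"
proof -
  note F = pos lt1 tot
  define m where "m = moment p 2"
  have m0: "0 < m" and m1: "m < 1" unfolding m_def using m_pos[OF F] m_lt1[OF F] by auto
  have aT: "a_seq p k = infsum (\<lambda>i. infsum (G p) (Tset k i)) {k<..}" for k
    by (rule a_seq_T[OF F])
  have ahs: "((\<lambda>i. infsum (G p) (Tset k i)) has_sum a_seq p k) {k<..}" for k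
    unfolding aT using muT_summable[OF F] by simp
  have anonneg: "0 \<le> a_seq p k" for k
    unfolding aT by (rule infsum_nonneg) (rule mu_nonneg[OF F])
  have geo: "((\<lambda>i. m ^ i) has_sum (m ^ Suc k / (1 - m))) {k<..}" for k
    using geo_has_sum[of m k] m0 m1 by simp
  have P1: "\<exists>A :: nat \<Rightarrow> real. A \<longlonglongrightarrow> 0 \<and>
            (\<forall>k\<ge>1. a_seq p k \<ge> m ^ (k+1) / (1 - m) - A k)"
  proof (intro exI conjI allI impI)
    show "(\<lambda>k. m ^ (k+1) / (1 - m)) \<longlonglongrightarrow> 0"
    proof -
      have "(\<lambda>n. m ^ n) \<longlonglongrightarrow> 0" using m0 m1 by (intro LIMSEQ_power_zero) simp
      then have "(\<lambda>n. m ^ Suc n) \<longlonglongrightarrow> 0" by (rule LIMSEQ_Suc)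
      from tendsto_divide_zero[OF this, of "1 - m"] show ?thesis by simp
    qed
  qed (use anonneg in simp)
  have Pa: "m \<le> 1/2 \<longrightarrow> (\<forall>k\<ge>1. m ^ k > a_seq p k)"
  proof (intro impI allI)
    fix k :: nat assume mh: "m \<le> 1/2" and k1: "k \<ge> 1"
    define q where "q = p undefined ^ 2"
    have q0: "0 < q" using pos[of undefined] by (simp add: q_def)
    have q1: "q < 1" using m_ge[OF F, of undefined] m1 by (simp add: q_def m_def)
    have gq: "((\<lambda>i. m ^ i - q ^ i) has_sum (m ^ Suc k / (1 - m) - q ^ Suc k / (1 - q))) {k<..}"
      using has_sum_add[OF geo has_sum_cmult_right[OF geo_has_sum[of q k], of "-1"]] q0 q1 by simp
    have "a_seq p k \<le> m ^ Suc k / (1 - m) - q ^ Suc k / (1 - q)"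
      by (rule has_sum_mono[OF ahs gq]) (use muT_rep[OF F] in \<open>auto simp: q_def m_def\<close>)
    also have "\<dots> < m ^ Suc k / (1 - m)" using q0 q1 by simp
    also have "\<dots> \<le> m ^ k"
    proof -
      have "m ^ Suc k = m * m ^ k" by simp
      also have "\<dots> \<le> (1 - m) * m ^ k" using mh m0 by (intro mult_right_mono) auto
      finally show ?thesis using m1 by (simp add: pos_divide_le_eq mult.commute)
    qed
    finally show "m ^ k > a_seq p k" .
  qed
  have Pb1: "a_seq p 1 < m"
  proof -
    define m4 where "m4 = infsum (\<lambda>a. p a ^ 4) UNIV"
    define c where "c = m4 / m ^ 2"
    have g1: "((\<lambda>i. m ^ i - c * m ^ i) has_sum (m ^ Suc 1 / (1 - m) - c * (m ^ Suc 1 / (1 - m)))) {1<..}"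
      using has_sum_add[OF geo[of 1] has_sum_cmult_right[OF geo[of 1], of "-c"]] by simp
    have le: "infsum (G p) (Tset 1 i) \<le> m ^ i - c * m ^ i" if "i \<in> {1<..}" for i
    proof -
      have i2: "2 \<le> i" using that by auto
      have "m ^ i = m ^ (2 + (i - 2))" by (simp only: le_add_diff_inverse[OF i2])
      also have "\<dots> = m ^ 2 * m ^ (i - 2)" by (rule power_add)
      finally have "m ^ i = m ^ 2 * m ^ (i - 2)" .
      then have "c * m ^ i = m4 * m ^ (i - 2)" using m0 by (simp add: c_def)
      then show ?thesis using muT_1[OF F i2] by (simp add: m_def m4_def)
    qed
    have cm: "c * m ^ 2 = m4" using m0 by (simp add: c_def)
    have "a_seq p 1 \<le> m ^ Suc 1 / (1 - m) - c * (m ^ Suc 1 / (1 - m))"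
      by (rule has_sum_mono[OF ahs g1 le])
    also have "\<dots> = (m ^ 2 - c * m ^ 2) / (1 - m)" by (simp add: diff_divide_distrib power2_eq_square)
    also have "\<dots> = (m ^ 2 - m4) / (1 - m)" using cm by simp
    also have "\<dots> < m"
    proof -
      have "2 * m ^ 2 < m + m4" using key_ineq[OF F] by (simp add: m_def m4_def)
      then have "m ^ 2 - m4 < m * (1 - m)" by (simp add: algebra_simps power2_eq_square)
      then show ?thesis using m1 by (simp add: pos_divide_less_eq)
    qed
    finally show ?thesis .
  qed
  have Pb2: "m > 1/2 \<longrightarrow> (\<exists>k0>0. \<forall>k>k0. a_seq p k > m ^ k)"
  proof
    assume mh: "m > 1/2"
    obtain M where M0: "0 \<le> M" and Mm: "M < m" and Mb: "\<And>a. p a ^ 2 \<le> M"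
      using exists_M[OF F] unfolding m_def by blast
    have M1: "M \<le> 1" using Mm m1 by simp
    have lim: "(\<lambda>L. m * (1 - m ^ L) / (1 - m)) \<longlonglongrightarrow> m * (1 - 0) / (1 - m)"
      using m0 m1 by (intro tendsto_intros LIMSEQ_power_zero) auto
    have "m * (1 - 0) / (1 - m) > 1" using mh m1 by (simp add: pos_less_divide_eq)
    from order_tendstoD(1)[OF lim this] obtain L where
      L: "1 < m * (1 - m ^ L) / (1 - m)" by (auto simp: eventually_sequentially)
    define S where "S = (\<Sum>n<L. m ^ Suc n)"
    have Seq: "S = m * (1 - m ^ L) / (1 - m)"
      unfolding S_def using m1 by (simp add: sum_distrib_left[symmetric] sum_gp_strict)
    have S1: "S > 1" using L Seq by simp
    have L0: "L \<noteq> 0"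
    proof
      assume "L = 0"
      then have "S = 0" by (simp add: S_def)
      with S1 show False by simp
    qed
    define \<delta> where "\<delta> = S - 1"
    have d0: "\<delta> > 0" using S1 by (simp add: \<delta>_def)
    have limM: "(\<lambda>k. (M / m) ^ k) \<longlonglongrightarrow> 0" using M0 Mm m0 by (intro LIMSEQ_power_zero) auto
    have "\<delta> / (real L * real L) > 0" using d0 L0 by simp
    from order_tendstoD(2)[OF limM this] obtain N where
      N: "\<And>k. k \<ge> N \<Longrightarrow> (M / m) ^ k < \<delta> / (real L * real L)" by (auto simp: eventually_sequentially)
    show "\<exists>k0>0. \<forall>k>k0. a_seq p k > m ^ k"
    proof (intro exI[of _ "Suc N"] conjI allI impI)
      fix k assume k: "k > Suc N"
      have fin: "finite ((\<lambda>n. k + 1 + n) ` {..<L})" by simp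
      have sub: "(\<lambda>n. k + 1 + n) ` {..<L} \<subseteq> {k<..}" by auto
      have "(\<Sum>i\<in>(\<lambda>n. k + 1 + n) ` {..<L}. infsum (G p) (Tset k i)) \<le> a_seq p k"
        by (rule finite_sum_le_has_sum[OF ahs fin sub]) (rule mu_nonneg[OF F])
      moreover have "(\<Sum>i\<in>(\<lambda>n. k + 1 + n) ` {..<L}. infsum (G p) (Tset k i))
          = (\<Sum>n<L. infsum (G p) (Tset k (k + 1 + n)))"
        by (subst sum.reindex) (auto simp: inj_on_def)
      moreover have "(\<Sum>n<L. m ^ (k + 1 + n) - real L * M ^ k) \<le> (\<Sum>n<L. infsum (G p) (Tset k (k + 1 + n)))"
      proof (rule sum_mono)
        fix n assume n: "n \<in> {..<L}"
        show "m ^ (k + 1 + n) - real L * M ^ k \<le> infsum (G p) (Tset k (k + 1 + n))"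
          unfolding m_def by (rule muT_lower[OF F M0 M1 Mb]) (use n in auto)
      qed
      moreover have "(\<Sum>n<L. m ^ (k + 1 + n) - real L * M ^ k) = m ^ k * S - real L * real L * M ^ k"
        by (simp add: S_def sum_subtractf sum_distrib_left power_add mult.left_commute)
      moreover have "real L * real L * M ^ k < \<delta> * m ^ k"
      proof -
        have eq: "M ^ k = (M / m) ^ k * m ^ k" using m0 by (simp add: power_divide)
        have Nk: "(M / m) ^ k < \<delta> / (real L * real L)" using N k by simp
        have mk: "0 < m ^ k" using m0 by simp
        have "(M / m) ^ k * m ^ k < \<delta> / (real L * real L) * m ^ k"
          using mult_strict_right_mono[OF Nk mk] .
        then have "M ^ k < \<delta> / (real L * real L) * m ^ k" using eq by linarith
        then show ?thesis using L0 by (simp add: field_simps)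
      qed
      ultimately show "a_seq p k > m ^ k" unfolding \<delta>_def by (simp add: algebra_simps)
    qed simp
  qed
  show ?thesis unfolding m_def[symmetric] using P1 Pa Pb1 Pb2 by auto
qed

end
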